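(* Let $M$ be a finite $n$-dimensional simplicial complex, $\alpha\in H^1(M;\mathbb{Z}/2)$ nonzero, and $H\subseteq M$ a subcomplex of dimension at most $n-1$ that cuts $\alpha$. Let $x$ be a vertex of $H$ and $r\ge1$ an integer with $r<\frac{\operatorname{sys}^\alpha(M)-1}{2}$. Let $H'$ be the subcomplex consisting of $S(x,r)$ together with all simplices of $H$ not belonging to $B(x,r)$ and all their faces (i.e. $H'=(H\setminus (H\cap B(x,r)))\cup S(x,r)$). Then $H'$ cuts $\alpha$.
   Context: Distance between vertices of $M$ is the minimal number of edges in a path between them in the $1$-skeleton. For a vertex $x$ and integer $r\ge 1$, the ball $B(x,r)$ is the subcomplex consisting of all inclusion-maximal simplices of $M$ all of whose vertices are at distance at most $r$ from $x$ and at least one of whose vertices is at distance less than $r$ from $x$, together with all their faces. The sphere $S(x,r)$ is the subcomplex of all simplices of $B(x,r)$ whose vertices are all at distance exactly $r$ from $x$. For nonzero $\alpha\in H^1(M;\mathbb{Z}/2)$, $\operatorname{sys}^\alpha(M)$ is the minimal number of edges in a simplicial $1$-cycle $z$ (mod $2$) with $\alpha([z])\neq0$. A subcomplex $H$ cuts $\alpha$ if $\alpha$ restricts to zero in $H^1(|M|\setminus|H|;\mathbb{Z}/2)$, where $|M|\setminus|H|$ is the difference of geometric realizations. *)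

theory Defs
  imports "HOL-Analysis.Analysis" "HOL-Homology.Homology"
begin

definition simplicial_complex :: "nat set set \<Rightarrow> bool" where
  "simplicial_complex K \<longleftrightarrow>
     (\<forall>s\<in>K. finite s \<and> s \<noteq> {}) \<and>
     (\<forall>s\<in>K. \<forall>t. t \<subseteq> s \<and> t \<noteq> {} \<longrightarrow> t \<in> K)"

definition finite_complex_dim :: "nat set set \<Rightarrow> nat \<Rightarrow> bool" where
  "finite_complex_dim K n \<longleftrightarrow> simplicial_complex K \<and> finite K \<and>
     (\<exists>s\<in>K. card s = n + 1) \<and> (\<forall>s\<in>K. card s \<le> n + 1)"

definition subcomplex :: "nat set set \<Rightarrow> nat set set \<Rightarrow> bool" where
  "subcomplex H K \<longleftrightarrow> H \<subseteq> K \<and> simplicial_complex H"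

definition complex_dim_le :: "nat set set \<Rightarrow> nat \<Rightarrow> bool" where
  "complex_dim_le K d \<longleftrightarrow> (\<forall>s\<in>K. card s \<le> d + 1)"

text \<open>A point is a function nat \<Rightarrow> real (barycentric coordinates); it lies in |K|
  iff its support is a simplex of K, coordinates are nonnegative and sum to 1.
  The realization carries the subspace topology of the product topology, which on
  the finite-dimensional set |K| (K finite) is the Euclidean topology.\<close>

definition realization :: "nat set set \<Rightarrow> (nat \<Rightarrow> real) set" where
  "realization K = {p. {v. p v \<noteq> 0} \<in> K \<and> (\<forall>v. 0 \<le> p v) \<and> (\<Sum>v\<in>{v. p v \<noteq> 0}. p v) = 1}"

definition realization_top :: "nat set set \<Rightarrow> (nat \<Rightarrow> real) topology" where
  "realization_top K = subtopology (powertop_real UNIV) (realization K)"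

text \<open>A singular 1-cochain with Z/2 coefficients is a function from singular 1-simplices
  to bool (= Z/2); only its values on singular 1-simplices of the space matter.\<close>

definition cocycle1 :: "'a topology \<Rightarrow> (((nat \<Rightarrow> real) \<Rightarrow> 'a) \<Rightarrow> bool) \<Rightarrow> bool" where
  "cocycle1 X c \<longleftrightarrow> (\<forall>\<sigma>. singular_simplex 2 X \<sigma> \<longrightarrow>
      even (card {k\<in>{0..2::nat}. c (singular_face 2 k \<sigma>)}))"

definition coboundary1 :: "'a topology \<Rightarrow> (((nat \<Rightarrow> real) \<Rightarrow> 'a) \<Rightarrow> bool) \<Rightarrow> bool" where
  "coboundary1 X c \<longleftrightarrow> (\<exists>b :: ((nat \<Rightarrow> real) \<Rightarrow> 'a) \<Rightarrow> bool.
      \<forall>f. singular_simplex 1 X f \<longrightarrow>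
        (c f \<longleftrightarrow> b (singular_face 1 0 f) \<noteq> b (singular_face 1 1 f)))"

text \<open>The class [c] in H^1(X;Z/2) is zero iff c is a coboundary. Restriction of [c] to an
  open subset U is represented by c viewed on subtopology X U.\<close>

definition edge_simplex :: "nat \<Rightarrow> nat \<Rightarrow> (nat \<Rightarrow> real) \<Rightarrow> (nat \<Rightarrow> real)" where
  "edge_simplex u v = restrict (\<lambda>x w. (if w = u then x 0 else 0) + (if w = v then x 1 else 0))
                         (standard_simplex 1)"

definition simplicial_1cycle :: "nat set set \<Rightarrow> nat set set \<Rightarrow> bool" where
  "simplicial_1cycle K z \<longleftrightarrow> z \<subseteq> {e\<in>K. card e = 2} \<and> (\<forall>v. even (card {e\<in>z. v \<in> e}))"

text \<open>Value of the class of c on the homology class of a simplicial mod-2 1-cycle z.\<close>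
definition eval_cycle :: "(((nat \<Rightarrow> real) \<Rightarrow> (nat \<Rightarrow> real)) \<Rightarrow> bool) \<Rightarrow> nat set set \<Rightarrow> bool" where
  "eval_cycle c z \<longleftrightarrow> odd (card {e\<in>z. c (edge_simplex (Min e) (Max e))})"

definition sys_alpha :: "nat set set \<Rightarrow> (((nat \<Rightarrow> real) \<Rightarrow> (nat \<Rightarrow> real)) \<Rightarrow> bool) \<Rightarrow> nat" where
  "sys_alpha K c = Inf {card z | z. simplicial_1cycle K z \<and> eval_cycle c z}"

definition cuts :: "nat set set \<Rightarrow> nat set set \<Rightarrow> (((nat \<Rightarrow> real) \<Rightarrow> (nat \<Rightarrow> real)) \<Rightarrow> bool) \<Rightarrow> bool" where
  "cuts K H c \<longleftrightarrow>
     coboundary1 (subtopology (realization_top K) (realization K - realization H)) c"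

definition adjacent :: "nat set set \<Rightarrow> nat \<Rightarrow> nat \<Rightarrow> bool" where
  "adjacent K a b \<longleftrightarrow> a \<noteq> b \<and> {a, b} \<in> K"

definition dist_le :: "nat set set \<Rightarrow> nat \<Rightarrow> nat \<Rightarrow> nat \<Rightarrow> bool" where
  "dist_le K x y k \<longleftrightarrow> {x} \<in> K \<and> (\<exists>xs. xs \<noteq> [] \<and> hd xs = x \<and> last xs = y \<and> length xs \<le> k + 1 \<and>
      (\<forall>i. Suc i < length xs \<longrightarrow> adjacent K (xs ! i) (xs ! Suc i)))"

definition dist_eq :: "nat set set \<Rightarrow> nat \<Rightarrow> nat \<Rightarrow> nat \<Rightarrow> bool" where
  "dist_eq K x y k \<longleftrightarrow> dist_le K x y k \<and> (k = 0 \<or> \<not> dist_le K x y (k - 1))"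

definition maximal_simplex :: "nat set set \<Rightarrow> nat set \<Rightarrow> bool" where
  "maximal_simplex K s \<longleftrightarrow> s \<in> K \<and> (\<forall>t\<in>K. s \<subseteq> t \<longrightarrow> t = s)"

definition cball_sc :: "nat set set \<Rightarrow> nat \<Rightarrow> nat \<Rightarrow> nat set set" where
  "cball_sc K x r = {t. t \<noteq> {} \<and> (\<exists>s. maximal_simplex K s \<and> (\<forall>v\<in>s. dist_le K x v r) \<and>
                    (\<exists>v\<in>s. dist_le K x v (r - 1)) \<and> t \<subseteq> s)}"

definition sphere_sc :: "nat set set \<Rightarrow> nat \<Rightarrow> nat \<Rightarrow> nat set set" where
  "sphere_sc K x r = {t\<in>cball_sc K x r. \<forall>v\<in>t. dist_eq K x v r}"

definition modified_cut :: "nat set set \<Rightarrow> nat set set \<Rightarrow> nat \<Rightarrow> nat \<Rightarrow> nat set set" where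
  "modified_cut K H x r = sphere_sc K x r \<union>
      {t. t \<noteq> {} \<and> (\<exists>s\<in>H. s \<notin> cball_sc K x r \<and> t \<subseteq> s)}"

end

theory Submission imports Defs begin
lemma even3: "even (card {k\<in>{0..2::nat}. P k}) \<longleftrightarrow> (P 0 = (P 1 \<noteq> P 2))"
proof -
  have "card {k\<in>{0..2::nat}. P k} = (\<Sum>k\<in>{0..2::nat}. if P k then 1 else 0)"
    by (simp add: sum.If_cases Int_def)
  also have "\<dots> = (if P 0 then 1 else 0) + (if P 1 then 1 else 0) + (if P 2 then 1 else (0::nat))"
    by (simp add: numeral_2_eq_2)
  finally show ?thesis
    by (cases "P 0"; cases "P 1"; cases "P 2") (simp_all only: if_True if_False; simp)+
qed

abbreviation PT :: "(nat \<Rightarrow> real) topology" where "PT \<equiv> powertop_real UNIV"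
definition supp :: "(nat\<Rightarrow>real) \<Rightarrow> nat set" where "supp p = {v. p v \<noteq> 0}"
definition pt :: "nat \<Rightarrow> nat \<Rightarrow> real" where "pt u = (\<lambda>i. if i = u then 1 else 0)"
definition os1 where "os1 a b = oriented_simplex 1 (\<lambda>j. if j = 0 then a else b)"
definition os2 where "os2 a b c = oriented_simplex 2 (\<lambda>j. if j = 0 then a else if j = 1 then b else c)"

lemma face_os2:
  "singular_face 2 0 (os2 a b c) = os1 b c"
  "singular_face 2 1 (os2 a b c) = os1 a c"
  "singular_face 2 2 (os2 a b c) = os1 a b"
  unfolding os1_def os2_def
  by (subst singular_face_oriented_simplex; simp add: oriented_simplex_eq le_Suc_eq)+

lemma face_os2_Suc: "singular_face 2 (Suc 0) (os2 a b c) = os1 a c"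
  using face_os2(2) by simp

lemma os1_app: "x \<in> standard_simplex 1 \<Longrightarrow> os1 a b x = (\<lambda>i. a i * x 0 + b i * x 1)"
  by (simp add: os1_def oriented_simplex_def)

lemma os2_app: "x \<in> standard_simplex 2 \<Longrightarrow> os2 a b c x = (\<lambda>i. a i * x 0 + b i * x 1 + c i * x 2)"
  by (simp add: os2_def oriented_simplex_def numeral_2_eq_2)

lemma std1_iff: "x \<in> standard_simplex 1 \<longleftrightarrow> 0 \<le> x 0 \<and> 0 \<le> x 1 \<and> x 0 + x 1 = 1 \<and> (\<forall>i>1. x i = 0)"
proof
  assume "x \<in> standard_simplex 1" then show "0 \<le> x 0 \<and> 0 \<le> x 1 \<and> x 0 + x 1 = 1 \<and> (\<forall>i>1. x i = 0)"
    by (simp add: standard_simplex_def)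
next
  assume a: "0 \<le> x 0 \<and> 0 \<le> x 1 \<and> x 0 + x 1 = 1 \<and> (\<forall>i>1. x i = 0)"
  have "0 \<le> x i \<and> x i \<le> 1" for i
    using a by (cases "i = 0"; cases "i = 1") auto
  then show "x \<in> standard_simplex 1" using a by (simp add: standard_simplex_def)
qed

lemma realization_iff: "p \<in> realization M \<longleftrightarrow> supp p \<in> M \<and> (\<forall>v. 0 \<le> p v) \<and> sum p (supp p) = 1"
  by (simp add: realization_def supp_def)

lemma sum_supp_T:
  assumes "p \<in> realization M" "supp p \<subseteq> T" "finite T"
  shows "sum p T = 1"
proof -
  have "sum p T = sum p (supp p)"
    using assms by (intro sum.mono_neutral_right) (auto simp: supp_def)
  then show ?thesis using assms by (simp add: realization_iff)
qed

lemma SC_sub: "simplicial_complex M \<Longrightarrow> s \<in> M \<Longrightarrow> t \<subseteq> s \<Longrightarrow> t \<noteq> {} \<Longrightarrow> t \<in> M"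
  unfolding simplicial_complex_def by blast

lemma os_in_real:
  assumes SC: "simplicial_complex M" and T: "T \<in> M"
    and l: "\<And>j. j \<le> p \<Longrightarrow> l j \<in> realization M \<and> supp (l j) \<subseteq> T"
    and x: "x \<in> standard_simplex p"
  shows "oriented_simplex p l x \<in> realization M"
proof -
  let ?q = "\<lambda>i. \<Sum>j\<le>p. l j i * x j"
  have fT: "finite T" "T \<noteq> {}" using SC T unfolding simplicial_complex_def by blast+
  have x0: "\<And>j. 0 \<le> x j" and xs: "(\<Sum>j\<le>p. x j) = 1" using x by (auto simp: standard_simplex_def)
  have nn: "\<And>i. 0 \<le> ?q i"
    using l x0 by (intro sum_nonneg mult_nonneg_nonneg) (auto simp: realization_iff)
  have out: "?q i = 0" if "i \<notin> T" for i
  proof -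
    have "\<And>j. j \<le> p \<Longrightarrow> l j i = 0" using l that by (auto simp: supp_def)
    then show ?thesis by simp
  qed
  have sT: "supp ?q \<subseteq> T" using out by (auto simp: supp_def)
  have "sum ?q T = (\<Sum>j\<le>p. x j * sum (l j) T)"
    by (subst sum.swap) (simp add: sum_distrib_left mult.commute)
  also have "\<dots> = (\<Sum>j\<le>p. x j)"
  proof (rule sum.cong)
    fix j assume "j \<in> {..p}"
    then have "sum (l j) T = 1" using l[of j] fT(1) sum_supp_T[of "l j" M T] by auto
    then show "x j * sum (l j) T = x j" by simp
  qed simp
  also have "\<dots> = 1" by (rule xs)
  finally have s1: "sum ?q T = 1" .
  have s2: "sum ?q (supp ?q) = sum ?q T"
    using sT fT by (intro sum.mono_neutral_left) (auto simp: supp_def)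
  have ne: "supp ?q \<noteq> {}"
  proof
    assume "supp ?q = {}" then have "sum ?q T = 0" using out
      by (intro sum.neutral) (auto simp: supp_def)
    with s1 show False by simp
  qed
  have sM: "supp ?q \<in> M" using SC_sub[OF SC T sT ne] .
  have eq: "oriented_simplex p l x = ?q" using x by (simp add: oriented_simplex_def)
  show ?thesis unfolding eq realization_iff using sM nn s1 s2 by (intro conjI allI) simp_all
qed

lemma pt_real: "{u} \<in> M \<Longrightarrow> pt u \<in> realization M"
  by (simp add: realization_iff supp_def pt_def)
lemma supp_pt [simp]: "supp (pt u) = {u}" by (simp add: supp_def pt_def)

lemma topspace_rt [simp]: "topspace (realization_top M) = realization M"
  by (simp add: realization_top_def)

lemma sing_os:
  assumes "\<And>x. x \<in> standard_simplex p \<Longrightarrow> oriented_simplex p l x \<in> realization M"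
  shows "singular_simplex p (realization_top M) (oriented_simplex p l)"
proof -
  have "simplicial_simplex p (realization M) (oriented_simplex p l)"
    using assms by (auto simp: simplicial_simplex)
  then show ?thesis by (simp add: simplicial_simplex_def realization_top_def)
qed

lemma cocyc:
  assumes "cocycle1 X c" "singular_simplex 2 X \<sigma>"
  shows "c (singular_face 2 0 \<sigma>) = (c (singular_face 2 1 \<sigma>) \<noteq> c (singular_face 2 2 \<sigma>))"
proof -
  have "even (card {k\<in>{0..2::nat}. c (singular_face 2 k \<sigma>)})"
    using assms unfolding cocycle1_def by blast
  then show ?thesis by (simp only: even3)
qed


lemma cocyc_os2:
  assumes "cocycle1 X c" "singular_simplex 2 X (os2 a b d)"
  shows "c (os1 b d) = (c (os1 a d) \<noteq> c (os1 a b))"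
  using cocyc[OF assms] by (simp only: face_os2)

lemma os2_sing:
  assumes SC: "simplicial_complex M" and T: "T \<in> M"
    and "a \<in> realization M" "supp a \<subseteq> T" "b \<in> realization M" "supp b \<subseteq> T"
        "d \<in> realization M" "supp d \<subseteq> T"
  shows "singular_simplex 2 (realization_top M) (os2 a b d)"
  unfolding os2_def
  by (rule sing_os, rule os_in_real[OF SC T]) (use assms in auto)

lemma edge_os1: "edge_simplex u w = os1 (pt u) (pt w)"
  by (rule ext) (auto simp: edge_simplex_def os1_def oriented_simplex_def pt_def)

lemma L0:
  assumes SC: "simplicial_complex M" and cc: "cocycle1 (realization_top M) c"
    and q: "q \<in> realization M"
  shows "\<not> c (os1 q q)"
proof -
  have "supp q \<in> M" using q by (simp add: realization_iff)
  then have "singular_simplex 2 (realization_top M) (os2 q q q)"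
    using os2_sing[OF SC, of "supp q"] q by auto
  from cocyc_os2[OF cc this] show ?thesis by blast
qed


lemma L4:
  assumes SC: "simplicial_complex M" and cc: "cocycle1 (realization_top M) c"
    and e: "{u, w} \<in> M"
  shows "c (os1 (pt u) (pt w)) = c (os1 (pt w) (pt u))"
proof -
  have u: "{u} \<in> M" and w: "{w} \<in> M" using SC_sub[OF SC e] by auto
  have "singular_simplex 2 (realization_top M) (os2 (pt u) (pt w) (pt u))"
    using os2_sing[OF SC e] pt_real[OF u] pt_real[OF w] by auto
  from cocyc_os2[OF cc this] L0[OF SC cc pt_real[OF u]] show ?thesis by blast
qed

lemma L3:
  assumes SC: "simplicial_complex M" and cc: "cocycle1 (realization_top M) c"
    and p: "p \<in> realization M" and u: "u \<in> supp p" and w: "w \<in> supp p"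
  shows "c (edge_simplex u w) = (c (os1 p (pt w)) \<noteq> c (os1 p (pt u)))"
proof -
  have T: "supp p \<in> M" using p by (simp add: realization_iff)
  have "{u} \<in> M" "{w} \<in> M" using SC_sub[OF SC T] u w by auto
  then have "singular_simplex 2 (realization_top M) (os2 p (pt u) (pt w))"
    using os2_sing[OF SC T] pt_real p u w by auto
  from cocyc_os2[OF cc this] show ?thesis unfolding edge_os1 by blast
qed

definition e :: "real \<Rightarrow> nat \<Rightarrow> real" where "e t = (\<lambda>i. if i = 0 then 1 - t else if i = 1 then t else 0)"
definition q2 :: "real \<Rightarrow> real \<Rightarrow> nat \<Rightarrow> real" where "q2 t s = (\<lambda>i. if i = 0 then t else if i = 1 then s else 0)"
definition FF where "FF f y = f (e (y 0))"
definition gam where "gam f t = f (e t)"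
definition tri where "tri \<Phi> a b d = restrict (\<lambda>x. \<Phi> (os2 a b d x)) (standard_simplex 2)"
definition lin where "lin \<Phi> a b = restrict (\<lambda>x. \<Phi> (os1 a b x)) (standard_simplex 1)"
definition sub where "sub f a b = lin (FF f) (q2 a 0) (q2 b 0)"

lemma face_tri:
  "singular_face 2 0 (tri \<Phi> a b d) = lin \<Phi> b d"
  "singular_face 2 1 (tri \<Phi> a b d) = lin \<Phi> a d"
  "singular_face 2 2 (tri \<Phi> a b d) = lin \<Phi> a b"
proof -
  have *: "singular_face 2 k (tri \<Phi> a b d) = restrict (\<lambda>x. \<Phi> (singular_face 2 k (os2 a b d) x)) (standard_simplex 1)"
    if "k \<le> 2" for k
  proof (rule ext)
    fix x
    show "singular_face 2 k (tri \<Phi> a b d) x = restrict (\<lambda>x. \<Phi> (singular_face 2 k (os2 a b d) x)) (standard_simplex 1) x"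
    proof (cases "x \<in> standard_simplex 1")
      case True
      then have "simplical_face k x \<in> standard_simplex 2"
        using simplical_face_in_standard_simplex[of 2 k x] that by simp
      then show ?thesis using True by (simp add: singular_face_def tri_def)
    qed (simp add: singular_face_def)
  qed
  show "singular_face 2 0 (tri \<Phi> a b d) = lin \<Phi> b d"
       "singular_face 2 1 (tri \<Phi> a b d) = lin \<Phi> a d"
       "singular_face 2 2 (tri \<Phi> a b d) = lin \<Phi> a b"
    by (simp_all add: * face_os2 face_os2_Suc lin_def)
qed

lemma face_tri_Suc: "singular_face 2 (Suc 0) (tri \<Phi> a b d) = lin \<Phi> a d"
  using face_tri(2) by simp

lemma cocyc_tri:
  assumes "cocycle1 X c" "singular_simplex 2 X (tri \<Phi> a b d)"
  shows "c (lin \<Phi> b d) = (c (lin \<Phi> a d) \<noteq> c (lin \<Phi> a b))"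
  using cocyc[OF assms] by (simp only: face_tri)

lemma cont_os:
  "continuous_map (subtopology PT (standard_simplex p)) PT (oriented_simplex p l)"
proof -
  have "simplicial_simplex p UNIV (oriented_simplex p l)"
    by (auto simp: simplicial_simplex)
  then show ?thesis by (simp add: simplicial_simplex_def singular_simplex_def)
qed

lemma sing_tri:
  assumes "continuous_map (subtopology PT D) X \<Phi>" "\<And>x. x \<in> standard_simplex 2 \<Longrightarrow> os2 a b d x \<in> D"
  shows "singular_simplex 2 X (tri \<Phi> a b d)"
proof -
  have "continuous_map (subtopology PT (standard_simplex 2)) (subtopology PT D) (os2 a b d)"
    using cont_os[of 2] assms(2) unfolding os2_def by (auto simp: continuous_map_in_subtopology)
  then have "continuous_map (subtopology PT (standard_simplex 2)) X (\<Phi> \<circ> os2 a b d)"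
    using assms(1) continuous_map_compose by blast
  then have "continuous_map (subtopology PT (standard_simplex 2)) X (tri \<Phi> a b d)"
    by (rule continuous_map_eq) (simp add: tri_def)
  then show ?thesis by (simp add: singular_simplex_def tri_def)
qed

lemma e_std: "0 \<le> t \<Longrightarrow> t \<le> 1 \<Longrightarrow> e t \<in> standard_simplex 1"
  using std1_iff[of "e t"] by (simp add: e_def)

lemma cont_FF:
  assumes f: "singular_simplex 1 X f"
  shows "continuous_map (subtopology PT {y. 0 \<le> y 0 \<and> y 0 \<le> 1}) X (FF f)"
proof -
  have c1: "continuous_map (subtopology PT {y. 0 \<le> y 0 \<and> y 0 \<le> 1}) PT (\<lambda>y. e (y 0))"
    unfolding continuous_map_componentwise_UNIV
  proof
    fix i
    have p0: "continuous_map PT euclideanreal (\<lambda>y. y 0)"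
      by (rule continuous_map_product_projection) simp
    have "continuous_map PT euclideanreal (\<lambda>y. e (y 0) i)"
    proof (cases "i = 0")
      case True then show ?thesis using p0 by (simp add: e_def continuous_map_diff)
    next
      case False then show ?thesis using p0 by (cases "i = 1") (simp_all add: e_def)
    qed
    then show "continuous_map (subtopology PT {y. 0 \<le> y 0 \<and> y 0 \<le> 1}) euclideanreal (\<lambda>y. e (y 0) i)"
      by (rule continuous_map_from_subtopology)
  qed
  have "continuous_map (subtopology PT {y. 0 \<le> y 0 \<and> y 0 \<le> 1}) (subtopology PT (standard_simplex 1)) (\<lambda>y. e (y 0))"
    using c1 e_std by (auto simp: continuous_map_in_subtopology)
  moreover have "continuous_map (subtopology PT (standard_simplex 1)) X f"
    using f by (simp add: singular_simplex_def)
  ultimately show ?thesis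
    unfolding FF_def using continuous_map_compose[unfolded o_def] by blast
qed


lemma std1_facts: "x \<in> standard_simplex 1 \<Longrightarrow> 0 \<le> x 0 \<and> 0 \<le> x 1 \<and> x 0 = 1 - x 1 \<and> x 1 \<le> 1 \<and> (\<forall>i>1. x i = 0)"
  using std1_iff[of x] by auto

lemma std2_facts: "x \<in> standard_simplex 2 \<Longrightarrow> 0 \<le> x 0 \<and> 0 \<le> x 1 \<and> 0 \<le> x 2 \<and> x 0 + x 1 + x 2 = 1"
  by (simp add: standard_simplex_def numeral_2_eq_2)

lemma conv3:
  fixes x0 x1 x2 :: real
  assumes "0 \<le> x0" "0 \<le> x1" "0 \<le> x2" "x0 + x1 + x2 = 1"
    "lo \<le> \<alpha>" "\<alpha> \<le> hi" "lo \<le> \<beta>" "\<beta> \<le> hi" "lo \<le> \<gamma>" "\<gamma> \<le> hi"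
  shows "lo \<le> \<alpha> * x0 + \<beta> * x1 + \<gamma> * x2 \<and> \<alpha> * x0 + \<beta> * x1 + \<gamma> * x2 \<le> hi"
proof -
  have "lo * x0 \<le> \<alpha> * x0" "lo * x1 \<le> \<beta> * x1" "lo * x2 \<le> \<gamma> * x2"
       "\<alpha> * x0 \<le> hi * x0" "\<beta> * x1 \<le> hi * x1" "\<gamma> * x2 \<le> hi * x2"
    using assms by (auto intro: mult_right_mono)
  moreover have "lo * x0 + lo * x1 + lo * x2 = lo" "hi * x0 + hi * x1 + hi * x2 = hi"
    using assms(4) by (simp_all add: distrib_left[symmetric])
  ultimately show ?thesis by linarith
qed

lemma sub_full:
  assumes f: "singular_simplex 1 X f"
  shows "sub f 0 1 = f"
proof (rule ext)
  fix x
  show "sub f 0 1 x = f x"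
  proof (cases "x \<in> standard_simplex 1")
    case True
    have "e (x 1) = x"
      using std1_facts[OF True] by (auto simp: e_def)
    then show ?thesis using True
      by (simp add: sub_def lin_def FF_def os1_app q2_def)
  next
    case False
    then show ?thesis using f by (simp add: sub_def lin_def singular_simplex_def extensional_def)
  qed
qed

lemma sub_const: "sub f a a = os1 (gam f a) (gam f a)"
proof (rule ext)
  fix x
  show "sub f a a x = os1 (gam f a) (gam f a) x"
  proof (cases "x \<in> standard_simplex 1")
    case True
    have "a * x 0 + a * x 1 = a * (x 0 + x 1)" by (simp add: algebra_simps)
    then have "a * x 0 + a * x 1 = a" using std1_facts[OF True] by simp
    moreover have "(\<lambda>i. gam f a i * x 0 + gam f a i * x 1) = gam f a"
    proof (rule ext)
      fix i
      have "gam f a i * x 0 + gam f a i * x 1 = gam f a i * (x 0 + x 1)" by (simp add: algebra_simps)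
      then show "gam f a i * x 0 + gam f a i * x 1 = gam f a i" using std1_facts[OF True] by simp
    qed
    ultimately show ?thesis using True
      by (simp add: sub_def lin_def FF_def os1_app q2_def gam_def)
  next
    case False
    then show ?thesis by (simp add: sub_def lin_def os1_def oriented_simplex_def)
  qed
qed

lemma subdiv:
  assumes cc: "cocycle1 X c" and f: "singular_simplex 1 X f"
    and "0 \<le> a" "a \<le> 1" "0 \<le> m" "m \<le> 1" "0 \<le> b" "b \<le> 1"
  shows "c (sub f m b) = (c (sub f a b) \<noteq> c (sub f a m))"
proof -
  have "singular_simplex 2 X (tri (FF f) (q2 a 0) (q2 m 0) (q2 b 0))"
  proof (rule sing_tri[OF cont_FF[OF f]])
    fix x assume x: "x \<in> standard_simplex 2"
    show "os2 (q2 a 0) (q2 m 0) (q2 b 0) x \<in> {y. 0 \<le> y 0 \<and> y 0 \<le> 1}"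
      using std2_facts[OF x] conv3[of "x 0" "x 1" "x 2" 0 a 1 m b] assms
      by (simp add: os2_app[OF x] q2_def)
  qed
  from cocyc_tri[OF cc this] show ?thesis
    unfolding sub_def by blast
qed


lemma gam_real:
  assumes f: "singular_simplex 1 (realization_top M) f" and "0 \<le> t" "t \<le> 1"
  shows "gam f t \<in> realization M"
proof -
  have "f ` standard_simplex 1 \<subseteq> topspace (realization_top M)"
    using f unfolding singular_simplex_def
    by (metis continuous_map_image_subset_topspace topspace_standard_simplex)
  then show ?thesis using e_std[OF assms(2,3)] by (auto simp: gam_def)
qed

lemma cone:
  assumes SC: "simplicial_complex M" and cc: "cocycle1 (realization_top M) c"
    and f: "singular_simplex 1 (realization_top M) f"
    and ab: "0 \<le> a" "a \<le> 1" "0 \<le> b" "b \<le> 1"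
    and star: "\<And>t. min a b \<le> t \<Longrightarrow> t \<le> max a b \<Longrightarrow> w \<in> supp (gam f t)"
  shows "c (sub f a b) = (c (os1 (gam f a) (pt w)) \<noteq> c (os1 (gam f b) (pt w)))"
proof -
  define D where "D = {y::nat\<Rightarrow>real. min a b \<le> y 0 \<and> y 0 \<le> max a b \<and> 0 \<le> y 1 \<and> y 1 \<le> 1}"
  define \<Phi> :: "(nat \<Rightarrow> real) \<Rightarrow> nat \<Rightarrow> real" where "\<Phi> = (\<lambda>y. \<lambda>i. (1 - y 1) * FF f y i + y 1 * pt w i)"
  have D1: "D \<subseteq> {y. 0 \<le> y 0 \<and> y 0 \<le> 1}" using ab by (auto simp: D_def)
  have wM: "{w} \<in> M"
  proof -
    have "gam f a \<in> realization M" using gam_real[OF f ab(1,2)] .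
    then have "supp (gam f a) \<in> M" by (simp add: realization_iff)
    moreover have "w \<in> supp (gam f a)" using star[of a] by simp
    ultimately show ?thesis using SC_sub[OF SC] by blast
  qed
  have img: "\<Phi> y \<in> realization M" if y: "y \<in> D" for y
  proof -
    let ?t = "y 0"
    have t01: "0 \<le> ?t" "?t \<le> 1" using y D1 by auto
    have p: "gam f ?t \<in> realization M" using gam_real[OF f t01] .
    have wp: "w \<in> supp (gam f ?t)" using star y by (auto simp: D_def)
    have T: "supp (gam f ?t) \<in> M" using p by (simp add: realization_iff)
    have x: "q2 (1 - y 1) (y 1) \<in> standard_simplex 1"
      using y std1_iff[of "q2 (1 - y 1) (y 1)"] by (auto simp: D_def q2_def)
    have "oriented_simplex 1 (\<lambda>j. if j = 0 then gam f ?t else pt w) (q2 (1 - y 1) (y 1)) \<in> realization M"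
      by (rule os_in_real[OF SC T _ x]) (use p wp pt_real[OF wM] in auto)
    moreover have "oriented_simplex 1 (\<lambda>j. if j = 0 then gam f ?t else pt w) (q2 (1 - y 1) (y 1)) = \<Phi> y"
      using x by (simp add: oriented_simplex_def \<Phi>_def FF_def gam_def q2_def mult.commute)
    ultimately show ?thesis by simp
  qed
  have cF: "continuous_map (subtopology PT D) PT (FF f)"
  proof -
    have "continuous_map (subtopology PT D) (realization_top M) (FF f)"
      using continuous_map_from_subtopology_mono[OF cont_FF[OF f] D1] .
    then show ?thesis by (simp add: realization_top_def continuous_map_in_subtopology)
  qed
  have cPhi: "continuous_map (subtopology PT D) (realization_top M) \<Phi>"
  proof -
    have "continuous_map (subtopology PT D) PT \<Phi>"
      unfolding continuous_map_componentwise_UNIV \<Phi>_def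
    proof
      fix i
      have ci: "continuous_map (subtopology PT D) euclideanreal (\<lambda>y. FF f y i)"
        using continuous_map_compose[OF cF continuous_map_product_projection[of i UNIV]]
        by (simp add: o_def)
      have c1: "continuous_map (subtopology PT D) euclideanreal (\<lambda>y. y 1)"
        by (intro continuous_map_from_subtopology continuous_map_product_projection) auto
      show "continuous_map (subtopology PT D) euclideanreal (\<lambda>y. (1 - y 1) * FF f y i + y 1 * pt w i)"
        by (intro continuous_intros ci c1)
    qed
    then show ?thesis using img
      by (auto simp: realization_top_def continuous_map_in_subtopology)
  qed
  have s1: "singular_simplex 2 (realization_top M) (tri \<Phi> (q2 a 0) (q2 b 0) (q2 b 1))"
  proof (rule sing_tri[OF cPhi])
    fix x assume x: "x \<in> standard_simplex 2"
    show "os2 (q2 a 0) (q2 b 0) (q2 b 1) x \<in> D"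
      using std2_facts[OF x] conv3[of "x 0" "x 1" "x 2" "min a b" a "max a b" b b]
      by (simp add: os2_app[OF x] q2_def D_def)
  qed
  have s2: "singular_simplex 2 (realization_top M) (tri \<Phi> (q2 a 0) (q2 a 1) (q2 b 1))"
  proof (rule sing_tri[OF cPhi])
    fix x assume x: "x \<in> standard_simplex 2"
    show "os2 (q2 a 0) (q2 a 1) (q2 b 1) x \<in> D"
      using std2_facts[OF x] conv3[of "x 0" "x 1" "x 2" "min a b" a "max a b" a b]
      by (simp add: os2_app[OF x] q2_def D_def)
  qed
  have lin_seg: "lin \<Phi> (q2 s 0) (q2 s 1) = os1 (gam f s) (pt w)" for s
  proof (rule ext)
    fix x
    show "lin \<Phi> (q2 s 0) (q2 s 1) x = os1 (gam f s) (pt w) x"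
    proof (cases "x \<in> standard_simplex 1")
      case True
      note xf = std1_facts[OF True]
      have "s * x 0 + s * x 1 = s * (x 0 + x 1)" by (simp add: algebra_simps)
      then have "s * x 0 + s * x 1 = s" using xf by simp
      then show ?thesis using True xf
        by (simp add: lin_def os1_app \<Phi>_def FF_def gam_def q2_def mult.commute)
    qed (simp add: lin_def os1_def oriented_simplex_def)
  qed
  have lin_sub: "lin \<Phi> (q2 a 0) (q2 b 0) = sub f a b"
  proof (rule ext)
    fix x
    show "lin \<Phi> (q2 a 0) (q2 b 0) x = sub f a b x"
      by (cases "x \<in> standard_simplex 1") (simp_all add: lin_def sub_def os1_app \<Phi>_def FF_def q2_def)
  qed
  have lin_top: "lin \<Phi> (q2 a 1) (q2 b 1) = os1 (pt w) (pt w)"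
  proof (rule ext)
    fix x
    show "lin \<Phi> (q2 a 1) (q2 b 1) x = os1 (pt w) (pt w) x"
    proof (cases "x \<in> standard_simplex 1")
      case True
      note xf = std1_facts[OF True]
      have "(\<lambda>i. pt w i * x 0 + pt w i * x 1) = pt w"
      proof (rule ext)
        fix i
        have "pt w i * x 0 + pt w i * x 1 = pt w i * (x 0 + x 1)" by (simp add: algebra_simps)
        then show "pt w i * x 0 + pt w i * x 1 = pt w i" using xf by simp
      qed
      then show ?thesis using True xf
        by (simp add: lin_def os1_app \<Phi>_def FF_def gam_def q2_def)
    qed (simp add: lin_def os1_def oriented_simplex_def)
  qed
  have z: "\<not> c (os1 (pt w) (pt w))" using L0[OF SC cc pt_real[OF wM]] .
  from cocyc_tri[OF cc s1] cocyc_tri[OF cc s2] z show ?thesis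
    unfolding lin_seg lin_sub lin_top by blast
qed


definition symd :: "'a set \<Rightarrow> 'a set \<Rightarrow> 'a set" where "symd A B = (A - B) \<union> (B - A)"

lemma card_symd:
  assumes "finite A" "finite B"
  shows "card (symd A B) + 2 * card (A \<inter> B) = card A + card B"
proof -
  have u: "card (A \<union> B) + card (A \<inter> B) = card A + card B"
    using card_Un_Int[OF assms] by simp
  have "symd A B = (A \<union> B) - (A \<inter> B)" by (auto simp: symd_def)
  then have "card (symd A B) = card (A \<union> B) - card (A \<inter> B)"
    using assms card_Diff_subset[of "A \<inter> B" "A \<union> B"] by auto
  moreover have "card (A \<inter> B) \<le> card (A \<union> B)" using assms by (intro card_mono) auto
  ultimately show ?thesis using u by simp
qed

lemma odd_symd:
  assumes "finite A" "finite B"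
  shows "odd (card {E\<in>symd A B. P E}) = (odd (card {E\<in>A. P E}) \<noteq> odd (card {E\<in>B. P E}))"
proof -
  have "{E\<in>symd A B. P E} = symd {E\<in>A. P E} {E\<in>B. P E}" by (auto simp: symd_def)
  then have "card {E\<in>symd A B. P E} + 2 * card ({E\<in>A. P E} \<inter> {E\<in>B. P E}) = card {E\<in>A. P E} + card {E\<in>B. P E}"
    using card_symd[of "{E\<in>A. P E}" "{E\<in>B. P E}"] assms by simp
  then show ?thesis by presburger
qed

lemma card_symd_le: "finite A \<Longrightarrow> finite B \<Longrightarrow> card (symd A B) \<le> card A + card B"
  using card_symd by fastforce

lemma finite_symd: "finite A \<Longrightarrow> finite B \<Longrightarrow> finite (symd A B)"
  by (simp add: symd_def)

fun walk :: "nat set set \<Rightarrow> nat list \<Rightarrow> bool" where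
  "walk M (a # b # xs) = (adjacent M a b \<and> walk M (b # xs))"
| "walk M _ = True"

fun zw :: "nat list \<Rightarrow> nat set set" where
  "zw (a # b # xs) = symd {{a, b}} (zw (b # xs))"
| "zw _ = {}"

definition Qc :: "(((nat \<Rightarrow> real) \<Rightarrow> (nat \<Rightarrow> real)) \<Rightarrow> bool) \<Rightarrow> nat set \<Rightarrow> bool" where
  "Qc c E = c (edge_simplex (Min E) (Max E))"

fun wpar :: "(((nat \<Rightarrow> real) \<Rightarrow> (nat \<Rightarrow> real)) \<Rightarrow> bool) \<Rightarrow> nat list \<Rightarrow> bool" where
  "wpar c (a # b # xs) = (Qc c {a, b} \<noteq> wpar c (b # xs))"
| "wpar c _ = False"

lemma walk_idx: "(\<forall>i. Suc i < length xs \<longrightarrow> adjacent M (xs ! i) (xs ! Suc i)) \<longleftrightarrow> walk M xs"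
proof (induction M xs rule: walk.induct)
  case (1 M a b xs)
  have "(\<forall>i. Suc i < length (a # b # xs) \<longrightarrow> adjacent M ((a # b # xs) ! i) ((a # b # xs) ! Suc i))
      \<longleftrightarrow> adjacent M a b \<and> (\<forall>i. Suc i < length (b # xs) \<longrightarrow> adjacent M ((b # xs) ! i) ((b # xs) ! Suc i))"
  proof
    assume H: "\<forall>i. Suc i < length (a # b # xs) \<longrightarrow> adjacent M ((a # b # xs) ! i) ((a # b # xs) ! Suc i)"
    show "adjacent M a b \<and> (\<forall>i. Suc i < length (b # xs) \<longrightarrow> adjacent M ((b # xs) ! i) ((b # xs) ! Suc i))"
    proof
      show "adjacent M a b" using H[rule_format, of 0] by simp
      show "\<forall>i. Suc i < length (b # xs) \<longrightarrow> adjacent M ((b # xs) ! i) ((b # xs) ! Suc i)"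
        using H by (metis length_Cons not_less_eq nth_Cons_Suc)
    qed
  next
    assume H: "adjacent M a b \<and> (\<forall>i. Suc i < length (b # xs) \<longrightarrow> adjacent M ((b # xs) ! i) ((b # xs) ! Suc i))"
    show "\<forall>i. Suc i < length (a # b # xs) \<longrightarrow> adjacent M ((a # b # xs) ! i) ((a # b # xs) ! Suc i)"
    proof (intro allI impI)
      fix i assume i: "Suc i < length (a # b # xs)"
      show "adjacent M ((a # b # xs) ! i) ((a # b # xs) ! Suc i)"
      proof (cases i)
        case 0 then show ?thesis using H by simp
      next
        case (Suc j) then show ?thesis using H i by simp
      qed
    qed
  qed
  then show ?case using 1 by simp
next
  case ("2_1" M) then show ?case by simp
next
  case ("2_2" M v) then show ?case by simp
qed

lemma zw_finite: "finite (zw xs)"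
  by (induction xs rule: zw.induct) (auto simp: finite_symd)

lemma zw_card: "card (zw xs) \<le> length xs - 1"
proof (induction xs rule: zw.induct)
  case (1 a b xs)
  have "card (zw (a # b # xs)) \<le> card {{a, b}} + card (zw (b # xs))"
    using card_symd_le[of "{{a,b}}" "zw (b # xs)"] zw_finite by simp
  then show ?case using 1 by simp
qed auto

lemma zw_edges: "walk M xs \<Longrightarrow> zw xs \<subseteq> {E\<in>M. card E = 2}"
proof (induction xs rule: zw.induct)
  case (1 a b xs)
  then have "{a, b} \<in> M" "a \<noteq> b" by (auto simp: adjacent_def)
  then have "{{a,b}} \<subseteq> {E\<in>M. card E = 2}" by auto
  then show ?case using 1 by (auto simp: symd_def)
qed auto

lemma zw_deg:
  assumes "walk M xs" "xs \<noteq> []"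
  shows "odd (card {E\<in>zw xs. v \<in> E}) \<longleftrightarrow> (hd xs \<noteq> last xs \<and> (v = hd xs \<or> v = last xs))"
  using assms
proof (induction xs rule: zw.induct)
  case (1 a b xs)
  have ab: "a \<noteq> b" using 1 by (auto simp: adjacent_def)
  have IH: "odd (card {E\<in>zw (b # xs). v \<in> E}) \<longleftrightarrow> (b \<noteq> last (b # xs) \<and> (v = b \<or> v = last (b # xs)))"
    using 1 by simp
  have "odd (card {E\<in>zw (a # b # xs). v \<in> E}) = (odd (card {E\<in>{{a,b}}. v \<in> E}) \<noteq> odd (card {E\<in>zw (b # xs). v \<in> E}))"
    using odd_symd[of "{{a,b}}" "zw (b # xs)"] zw_finite by simp
  moreover have "odd (card {E\<in>{{a,b}}. v \<in> E}) = (v = a \<or> v = b)"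
  proof -
    have "{E\<in>{{a,b}}. v \<in> E} = (if v = a \<or> v = b then {{a,b}} else {})" by auto
    then show ?thesis by simp
  qed
  ultimately show ?case using IH ab by auto
qed auto

lemma zw_par: "odd (card {E\<in>zw xs. Qc c E}) = wpar c xs"
proof (induction xs rule: zw.induct)
  case (1 a b xs)
  have "odd (card {E\<in>zw (a # b # xs). Qc c E}) = (odd (card {E\<in>{{a,b}}. Qc c E}) \<noteq> odd (card {E\<in>zw (b # xs). Qc c E}))"
    using odd_symd[of "{{a,b}}" "zw (b # xs)"] zw_finite by simp
  moreover have "odd (card {E\<in>{{a,b}}. Qc c E}) = Qc c {a,b}"
  proof -
    have "{E\<in>{{a,b}}. Qc c E} = (if Qc c {a,b} then {{a,b}} else {})" by auto
    then show ?thesis by simp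
  qed
  moreover have "wpar c (a # b # xs) = (Qc c {a,b} \<noteq> wpar c (b # xs))" by simp
  ultimately show ?case using 1 by blast
qed auto


definition isW :: "nat set set \<Rightarrow> nat \<Rightarrow> nat \<Rightarrow> nat \<Rightarrow> nat list \<Rightarrow> bool" where
  "isW M x r u xs \<longleftrightarrow> xs \<noteq> [] \<and> hd xs = x \<and> last xs = u \<and> length xs \<le> r + 1 \<and> walk M xs"

lemma sys_le:
  assumes "simplicial_1cycle M z" "eval_cycle c z"
  shows "sys_alpha M c \<le> card z"
  unfolding sys_alpha_def by (rule cInf_lower) (use assms in auto)

lemma par3: "(u::nat) \<noteq> w \<Longrightarrow> \<not> (((x \<noteq> u \<and> (v = x \<or> v = u)) \<noteq> (v = u \<or> v = w)) \<noteq> (x \<noteq> w \<and> (v = x \<or> v = w)))"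
  by blast

lemma edge_par:
  assumes sysb: "2 * r + 1 < sys_alpha M c"
    and wu: "isW M x r u Wu" and ww: "isW M x r w Ww" and e: "{u, w} \<in> M" "u \<noteq> w"
  shows "Qc c {u, w} = (wpar c Wu \<noteq> wpar c Ww)"
proof -
  define z where "z = symd (symd (zw Wu) {{u, w}}) (zw Ww)"
  have fin: "finite (zw Wu)" "finite (zw Ww)" "finite {{u,w}}" "finite (symd (zw Wu) {{u, w}})"
    using zw_finite finite_symd[OF zw_finite[of Wu], of "{{u,w}}"] by auto
  have wk: "walk M Wu" "walk M Ww" "Wu \<noteq> []" "Ww \<noteq> []" using wu ww by (auto simp: isW_def)
  have hl: "hd Wu = x" "last Wu = u" "hd Ww = x" "last Ww = w" using wu ww by (auto simp: isW_def)
  have sub: "z \<subseteq> {E\<in>M. card E = 2}"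
  proof -
    have "{{u,w}} \<subseteq> {E\<in>M. card E = 2}" using e by auto
    then show ?thesis using zw_edges[OF wk(1)] zw_edges[OF wk(2)] by (auto simp: z_def symd_def)
  qed
  have deg: "even (card {E\<in>z. v \<in> E})" for v
  proof -
    have F0: "odd (card {E\<in>z. v \<in> E}) = ((odd (card {E\<in>zw Wu. v \<in> E}) \<noteq> odd (card {E\<in>{{u,w}}. v \<in> E}))
           \<noteq> odd (card {E\<in>zw Ww. v \<in> E}))"
      unfolding z_def by (simp only: odd_symd[OF fin(4) fin(2)] odd_symd[OF fin(1) fin(3)])
    have F1: "odd (card {E\<in>{{u,w}}. v \<in> E}) = (v = u \<or> v = w)"
    proof -
      have "{E\<in>{{u,w}}. v \<in> E} = (if v = u \<or> v = w then {{u,w}} else {})" by auto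
      then show ?thesis by simp
    qed
    have F2: "odd (card {E\<in>zw Wu. v \<in> E}) = (x \<noteq> u \<and> (v = x \<or> v = u))"
      using zw_deg[OF wk(1,3), of v] hl by simp
    have F3: "odd (card {E\<in>zw Ww. v \<in> E}) = (x \<noteq> w \<and> (v = x \<or> v = w))"
      using zw_deg[OF wk(2,4), of v] hl by simp
    have F4: "odd (card {E\<in>z. v \<in> E}) = (((x \<noteq> u \<and> (v = x \<or> v = u)) \<noteq> (v = u \<or> v = w)) \<noteq> (x \<noteq> w \<and> (v = x \<or> v = w)))"
      by (simp only: F0 F1 F2 F3)
    have "\<not> (((x \<noteq> u \<and> (v = x \<or> v = u)) \<noteq> (v = u \<or> v = w)) \<noteq> (x \<noteq> w \<and> (v = x \<or> v = w)))"
      using e(2) by (rule par3)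
    with F4 show ?thesis by blast
  qed
  have cyc: "simplicial_1cycle M z" using sub deg by (simp add: simplicial_1cycle_def)
  have ev: "eval_cycle c z = ((wpar c Wu \<noteq> Qc c {u,w}) \<noteq> wpar c Ww)"
  proof -
    have "eval_cycle c z = odd (card {E\<in>z. Qc c E})" by (simp add: eval_cycle_def Qc_def)
    also have "\<dots> = ((odd (card {E\<in>zw Wu. Qc c E}) \<noteq> odd (card {E\<in>{{u,w}}. Qc c E}))
           \<noteq> odd (card {E\<in>zw Ww. Qc c E}))"
      unfolding z_def by (simp only: odd_symd[OF fin(4) fin(2)] odd_symd[OF fin(1) fin(3)])
    also have "odd (card {E\<in>{{u,w}}. Qc c E}) = Qc c {u,w}"
    proof -
      have "{E\<in>{{u,w}}. Qc c E} = (if Qc c {u,w} then {{u,w}} else {})" by auto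
      then show ?thesis by simp
    qed
    finally show ?thesis by (simp add: zw_par)
  qed
  have "card z \<le> card (symd (zw Wu) {{u, w}}) + card (zw Ww)"
    unfolding z_def using card_symd_le fin by blast
  also have "\<dots> \<le> card (zw Wu) + 1 + card (zw Ww)"
    using card_symd_le[of "zw Wu" "{{u,w}}"] fin by simp
  also have "\<dots> \<le> 2 * r + 1"
    using zw_card[of Wu] zw_card[of Ww] wu ww by (auto simp: isW_def)
  finally have cz: "card z \<le> 2 * r + 1" .
  have "\<not> eval_cycle c z"
  proof
    assume "eval_cycle c z"
    then have "sys_alpha M c \<le> card z" using sys_le cyc by blast
    then show False using cz sysb by simp
  qed
  then show ?thesis using ev by blast
qed

definition Pv :: "nat set set \<Rightarrow> (((nat \<Rightarrow> real) \<Rightarrow> (nat \<Rightarrow> real)) \<Rightarrow> bool) \<Rightarrow> nat \<Rightarrow> nat \<Rightarrow> nat \<Rightarrow> bool" where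
  "Pv M c x r u = wpar c (SOME xs. isW M x r u xs)"

definition bB :: "nat set set \<Rightarrow> (((nat \<Rightarrow> real) \<Rightarrow> (nat \<Rightarrow> real)) \<Rightarrow> bool) \<Rightarrow> nat \<Rightarrow> nat \<Rightarrow> (nat \<Rightarrow> real) \<Rightarrow> bool" where
  "bB M c x r p = (Pv M c x r (Min (supp p)) \<noteq> c (os1 p (pt (Min (supp p)))))"

lemma isW_ex: "dist_le M x u r \<Longrightarrow> \<exists>xs. isW M x r u xs"
  unfolding dist_le_def isW_def using walk_idx by blast

lemma Pv_edge:
  assumes sysb: "2 * r + 1 < sys_alpha M c"
    and "dist_le M x u r" "dist_le M x w r" "{u, w} \<in> M" "u \<noteq> w"
  shows "Qc c {u, w} = (Pv M c x r u \<noteq> Pv M c x r w)"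
  unfolding Pv_def
  by (rule edge_par[OF sysb someI_ex[OF isW_ex] someI_ex[OF isW_ex]]) (use assms in auto)

lemma Qc_edge:
  assumes SC: "simplicial_complex M" and cc: "cocycle1 (realization_top M) c" and e: "{u, w} \<in> M"
  shows "Qc c {u, w} = c (edge_simplex u w)"
proof (cases "u \<le> w")
  case True
  then show ?thesis by (simp add: Qc_def min_def max_def)
next
  case False
  then have "Qc c {u, w} = c (edge_simplex w u)" by (simp add: Qc_def min_def max_def)
  also have "\<dots> = c (edge_simplex u w)" using L4[OF SC cc e] by (simp add: edge_os1)
  finally show ?thesis .
qed

lemma seg_b:
  assumes SC: "simplicial_complex M" and cc: "cocycle1 (realization_top M) c"
    and sysb: "2 * r + 1 < sys_alpha M c"
    and p: "p \<in> realization M" and Wc: "\<forall>v\<in>supp p. dist_le M x v r" and w: "w \<in> supp p"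
  shows "c (os1 p (pt w)) = (bB M c x r p \<noteq> Pv M c x r w)"
proof -
  define u where "u = Min (supp p)"
  have T: "supp p \<in> M" using p by (simp add: realization_iff)
  have fin: "finite (supp p)" "supp p \<noteq> {}" using SC T unfolding simplicial_complex_def by blast+
  have u: "u \<in> supp p" using Min_in[OF fin] by (simp add: u_def)
  have bdef: "bB M c x r p = (Pv M c x r u \<noteq> c (os1 p (pt u)))" by (simp add: bB_def u_def)
  show ?thesis
  proof (cases "u = w")
    case True then show ?thesis using bdef by blast
  next
    case False
    have uw: "{u, w} \<in> M" using SC_sub[OF SC T] u w by auto
    have 1: "c (edge_simplex u w) = (c (os1 p (pt w)) \<noteq> c (os1 p (pt u)))"
      using L3[OF SC cc p u w] .
    have 2: "c (edge_simplex u w) = (Pv M c x r u \<noteq> Pv M c x r w)"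
      using Pv_edge[OF sysb Wc[rule_format, OF u] Wc[rule_format, OF w] uw False] Qc_edge[OF SC cc uw] by simp
    show ?thesis using 1 2 bdef by blast
  qed
qed

lemma gam_cont:
  assumes f: "singular_simplex 1 (realization_top M) f"
  shows "continuous_on {0..1} (\<lambda>t. gam f t v)"
proof -
  have ce: "continuous_map (top_of_set {0..1}) PT e"
    unfolding continuous_map_componentwise_UNIV
  proof
    fix i
    have "continuous_on {0..1::real} (\<lambda>t. e t i)"
      by (cases "i = 0"; cases "i = 1") (simp_all add: e_def continuous_intros)
    then show "continuous_map (top_of_set {0..1}) euclideanreal (\<lambda>t. e t i)"
      by (simp add: continuous_map_iff_continuous)
  qed
  have "continuous_map (top_of_set {0..1}) (subtopology PT (standard_simplex 1)) e"
    using ce e_std by (auto simp: continuous_map_in_subtopology)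
  then have "continuous_map (top_of_set {0..1}) (realization_top M) (f \<circ> e)"
    using f continuous_map_compose unfolding singular_simplex_def by blast
  then have "continuous_map (top_of_set {0..1}) PT (f \<circ> e)"
    by (simp add: realization_top_def continuous_map_in_subtopology)
  then have "continuous_map (top_of_set {0..1}) euclideanreal (\<lambda>t. (f \<circ> e) t v)"
    unfolding continuous_map_componentwise_UNIV by blast
  then show ?thesis by (simp add: continuous_map_iff_continuous gam_def o_def)
qed

lemma loc_pos:
  fixes g :: "real \<Rightarrow> real"
  assumes "continuous_on {0..1} g" "a \<in> {0..1}" "g a > 0"
  shows "\<exists>d>0. \<forall>t\<in>{0..1}. dist t a < d \<longrightarrow> g t > 0"
proof -
  obtain d where d: "d > 0" "\<forall>t\<in>{0..1}. dist t a < d \<longrightarrow> dist (g t) (g a) < g a"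
    using assms unfolding continuous_on_iff by metis
  have "g t > 0" if "t \<in> {0..1}" "dist t a < d" for t
    using d(2) that by (auto simp: dist_real_def)
  then show ?thesis using d(1) by blast
qed

lemma supp_ne:
  assumes SC: "simplicial_complex M" and p: "p \<in> realization M"
  shows "supp p \<in> M" "finite (supp p)" "supp p \<noteq> {}"
proof -
  show T: "supp p \<in> M" using p by (simp add: realization_iff)
  show "finite (supp p)" "supp p \<noteq> {}" using SC T unfolding simplicial_complex_def by blast+
qed

lemma supp_pos: "p \<in> realization M \<Longrightarrow> w \<in> supp p \<Longrightarrow> p w > 0"
  by (auto simp: realization_iff supp_def less_le)

lemma ballpath:
  assumes SC: "simplicial_complex M" and cc: "cocycle1 (realization_top M) c"
    and sysb: "2 * r + 1 < sys_alpha M c"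
    and f: "singular_simplex 1 (realization_top M) f"
    and WW: "\<forall>t\<in>{0..1}. \<forall>v\<in>supp (gam f t). dist_le M x v r"
  shows "c f = (bB M c x r (gam f 0) \<noteq> bB M c x r (gam f 1))"
proof -
  define Q where "Q t = (c (sub f 0 t) = (bB M c x r (gam f 0) \<noteq> bB M c x r (gam f t)))" for t
  have loc: "\<exists>T. openin (top_of_set {0..1}) T \<and> a \<in> T \<and> (\<forall>t\<in>T. Q a = Q t)"
    if a: "a \<in> {0..1::real}" for a
  proof -
    have pa: "gam f a \<in> realization M" using gam_real[OF f] a by auto
    obtain w where w: "w \<in> supp (gam f a)" using supp_ne[OF SC pa] by blast
    have pos: "gam f a w > 0" using supp_pos[OF pa w] .
    obtain d where d: "d > 0" "\<forall>t\<in>{0..1}. dist t a < d \<longrightarrow> gam f t w > 0"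
      using loc_pos[OF gam_cont[OF f] a pos] by blast
    define T where "T = {0..1} \<inter> ball a d"
    have "openin (top_of_set {0..1}) T" by (simp add: T_def openin_open_Int)
    moreover have "a \<in> T" using a d by (simp add: T_def)
    moreover have "Q a = Q t" if t: "t \<in> T" for t
    proof -
      have t01: "0 \<le> t" "t \<le> 1" and dt: "dist a t < d" using t by (auto simp: T_def)
      have a01: "0 \<le> a" "a \<le> 1" using a by auto
      have star: "w \<in> supp (gam f s)" if "min a t \<le> s" "s \<le> max a t" for s
      proof -
        have "0 \<le> s" "s \<le> 1" using that t01 a01 by auto
        moreover have "dist s a < d" using that dt by (auto simp: dist_real_def)
        ultimately have "gam f s w > 0" using d(2) by auto
        then show ?thesis by (simp add: supp_def)
      qed
      have pt': "gam f t \<in> realization M" using gam_real[OF f t01] .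
      have cn: "c (sub f a t) = (c (os1 (gam f a) (pt w)) \<noteq> c (os1 (gam f t) (pt w)))"
        by (rule cone[OF SC cc f a01 t01]) (rule star)
      have sa: "c (os1 (gam f a) (pt w)) = (bB M c x r (gam f a) \<noteq> Pv M c x r w)"
        by (rule seg_b[OF SC cc sysb pa _ w]) (use WW a in auto)
      have wt: "w \<in> supp (gam f t)" using star[of t] by simp
      have st: "c (os1 (gam f t) (pt w)) = (bB M c x r (gam f t) \<noteq> Pv M c x r w)"
        by (rule seg_b[OF SC cc sysb pt' _ wt]) (use WW t01 in auto)
      have sd: "c (sub f a t) = (c (sub f 0 t) \<noteq> c (sub f 0 a))"
        using subdiv[OF cc f, of 0 a t] a01 t01 by simp
      show ?thesis unfolding Q_def using cn sa st sd by blast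
    qed
    ultimately show ?thesis by blast
  qed
  have Q01: "Q 0 = Q 1"
    by (rule connected_equivalence_relation[of "{0..1}" 0 1 "\<lambda>x y. Q x = Q y"]) (use loc in auto)
  have p0: "gam f 0 \<in> realization M" using gam_real[OF f] by auto
  have "\<not> c (sub f 0 0)" using L0[OF SC cc p0] by (simp add: sub_const)
  then have "Q 0" by (simp add: Q_def)
  then have "Q 1" using Q01 by simp
  then show ?thesis by (simp add: Q_def sub_full[OF f])
qed

lemma walk_snoc: "walk M xs \<Longrightarrow> xs \<noteq> [] \<Longrightarrow> adjacent M (last xs) v \<Longrightarrow> walk M (xs @ [v])"
  by (induction M xs rule: walk.induct) auto

lemma dist_le_mono: "dist_le M x v k \<Longrightarrow> k \<le> k' \<Longrightarrow> dist_le M x v k'"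
proof -
  assume a: "dist_le M x v k" "k \<le> k'"
  obtain xs where xs: "{x} \<in> M" "xs \<noteq> []" "hd xs = x" "last xs = v" "length xs \<le> k + 1"
    "\<forall>i. Suc i < length xs \<longrightarrow> adjacent M (xs ! i) (xs ! Suc i)"
    using a(1) unfolding dist_le_def by blast
  have "length xs \<le> k' + 1" using xs(5) a(2) by simp
  then show ?thesis unfolding dist_le_def using xs by blast
qed

lemma dist_step:
  assumes "dist_le M x v k" "adjacent M v v'"
  shows "dist_le M x v' (Suc k)"
proof -
  obtain xs where xs: "{x} \<in> M" "xs \<noteq> []" "hd xs = x" "last xs = v" "length xs \<le> k + 1" "walk M xs"
    using assms(1) walk_idx unfolding dist_le_def by blast
  have "walk M (xs @ [v'])" using walk_snoc[OF xs(6,2)] xs(4) assms(2) by simp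
  moreover have "length (xs @ [v']) \<le> Suc k + 1" using xs(5) by simp
  moreover have "hd (xs @ [v']) = x" using xs(2,3) by simp
  ultimately show ?thesis unfolding dist_le_def using xs(1) walk_idx[of "xs @ [v']" M]
    by (intro conjI exI[of _ "xs @ [v']"]) simp_all
qed

definition inI :: "nat set set \<Rightarrow> nat \<Rightarrow> nat \<Rightarrow> (nat \<Rightarrow> real) \<Rightarrow> bool" where
  "inI M x r p \<longleftrightarrow> (\<exists>v\<in>supp p. dist_le M x v (r - 1))"

lemma near_simplex:
  assumes SC: "simplicial_complex M" and s: "s \<in> M" and v: "v \<in> s" "dist_le M x v (r - 1)"
    and r: "r \<ge> 1" and v': "v' \<in> s"
  shows "dist_le M x v' r"
proof (cases "v' = v")
  case True then show ?thesis using dist_le_mono[OF v(2)] by simp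
next
  case False
  have "{v, v'} \<in> M" using SC_sub[OF SC s] v v' by auto
  then have "adjacent M v v'" using False by (auto simp: adjacent_def)
  then have "dist_le M x v' (Suc (r - 1))" using dist_step[OF v(2)] by blast
  then show ?thesis using r by simp
qed

lemma inI_W:
  assumes SC: "simplicial_complex M" and p: "p \<in> realization M" and I: "inI M x r p" and r: "r \<ge> 1"
  shows "\<forall>v\<in>supp p. dist_le M x v r"
  using I near_simplex[OF SC supp_ne(1)[OF SC p] _ _ r] unfolding inI_def by blast

lemma inI_cball:
  assumes SC: "simplicial_complex M" and fM: "finite M" and p: "p \<in> realization M"
    and I: "inI M x r p" and r: "r \<ge> 1"
  shows "supp p \<in> cball_sc M x r"
proof -
  define S where "S = {s\<in>M. supp p \<subseteq> s}"
  have fS: "finite S" using fM by (simp add: S_def)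
  have neS: "S \<noteq> {}" using supp_ne(1)[OF SC p] by (auto simp: S_def)
  define m where "m = Max (card ` S)"
  have "m \<in> card ` S" unfolding m_def using fS neS by (intro Max_in) auto
  then obtain s where s: "s \<in> S" "card s = m" by auto
  have le: "card t \<le> card s" if "t \<in> S" for t using that fS s(2) by (simp add: m_def)
  have sM: "s \<in> M" and ps: "supp p \<subseteq> s" using s by (auto simp: S_def)
  have maxs: "maximal_simplex M s"
    unfolding maximal_simplex_def
  proof (intro conjI ballI impI)
    show "s \<in> M" by (rule sM)
    fix t assume t: "t \<in> M" "s \<subseteq> t"
    then have "t \<in> S" using ps by (auto simp: S_def)
    then have "card t \<le> card s" by (rule le)
    moreover have "finite t" using SC t unfolding simplicial_complex_def by blast
    ultimately show "t = s" using t(2) card_seteq by blast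
  qed
  obtain v where v: "v \<in> supp p" "dist_le M x v (r - 1)" using I by (auto simp: inI_def)
  have "\<forall>v'\<in>s. dist_le M x v' r" using near_simplex[OF SC sM _ v(2) r] v(1) ps by blast
  moreover have "supp p \<noteq> {}" using supp_ne[OF SC p] by blast
  ultimately show ?thesis unfolding cball_sc_def
    by (intro CollectI conjI exI[of _ s]) (use maxs ps v in auto)
qed

lemma notI_notcball:
  assumes p: "p \<in> realization M" and nI: "\<not> inI M x r p" and r: "r \<ge> 1"
    and nH: "supp p \<notin> modified_cut M H x r"
  shows "supp p \<notin> cball_sc M x r"
proof
  assume cb: "supp p \<in> cball_sc M x r"
  have "supp p \<notin> sphere_sc M x r" using nH by (simp add: modified_cut_def)
  then obtain v where v: "v \<in> supp p" "\<not> dist_eq M x v r" using cb by (auto simp: sphere_sc_def)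
  have "dist_le M x v r" using cb v(1) unfolding cball_sc_def by blast
  then have "dist_le M x v (r - 1)" using v(2) r by (simp add: dist_eq_def)
  then show False using nI v(1) by (auto simp: inI_def)
qed

lemma notI_notH:
  assumes SC: "simplicial_complex M" and p: "p \<in> realization M" and nI: "\<not> inI M x r p" and r: "r \<ge> 1"
    and nH: "supp p \<notin> modified_cut M H x r"
  shows "supp p \<notin> H"
proof
  assume h: "supp p \<in> H"
  have ncb: "supp p \<notin> cball_sc M x r" by (rule notI_notcball[OF p nI r nH])
  have "supp p \<noteq> {}" using supp_ne[OF SC p] by blast
  then have "supp p \<in> modified_cut M H x r" using h ncb by (auto simp: modified_cut_def)
  then show False using nH by blast
qed

lemma face_pt0:
  "singular_face 1 0 f (pt 0) = gam f 1" "singular_face 1 1 f (pt 0) = gam f 0"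
proof -
  have p0: "pt 0 \<in> standard_simplex 0" by (simp add: pt_def)
  have "simplical_face 0 (pt 0) = e 1" "simplical_face 1 (pt 0) = e 0"
    by (auto simp: simplical_face_def pt_def e_def)
  then show "singular_face 1 0 f (pt 0) = gam f 1" "singular_face 1 1 f (pt 0) = gam f 0"
    using p0 by (simp_all add: singular_face_def gam_def)
qed

lemma real_mem: "p \<in> realization M \<Longrightarrow> (p \<in> realization K \<longleftrightarrow> supp p \<in> K)"
  by (simp add: realization_iff)

lemma cball_sub: "t \<in> cball_sc M x r \<Longrightarrow> t' \<subseteq> t \<Longrightarrow> t' \<noteq> {} \<Longrightarrow> t' \<in> cball_sc M x r"
  unfolding cball_sc_def by blast

lemma dich:
  assumes SC: "simplicial_complex M" and fM: "finite M" and r: "r \<ge> 1"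
    and f: "singular_simplex 1 (realization_top M) f"
    and U: "\<forall>t\<in>{0..1}. supp (gam f t) \<notin> modified_cut M H x r"
  shows "(\<forall>t\<in>{0..1}. inI M x r (gam f t)) \<or> (\<forall>t\<in>{0..1}. \<not> inI M x r (gam f t))"
proof -
  have loc: "\<exists>T. openin (top_of_set {0..1}) T \<and> a \<in> T \<and> (\<forall>t\<in>T. inI M x r (gam f a) = inI M x r (gam f t))"
    if a: "a \<in> {0..1::real}" for a
  proof -
    have pa: "gam f a \<in> realization M" using gam_real[OF f] a by auto
    show ?thesis
    proof (cases "inI M x r (gam f a)")
      case True
      then obtain v where v: "v \<in> supp (gam f a)" "dist_le M x v (r - 1)" by (auto simp: inI_def)
      obtain d where d: "d > 0" "\<forall>t\<in>{0..1}. dist t a < d \<longrightarrow> gam f t v > 0"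
        using loc_pos[OF gam_cont[OF f] a supp_pos[OF pa v(1)]] by blast
      define T where "T = {0..1} \<inter> ball a d"
      have "openin (top_of_set {0..1}) T" by (simp add: T_def openin_open_Int)
      moreover have "a \<in> T" using a d by (simp add: T_def)
      moreover have "inI M x r (gam f t)" if t: "t \<in> T" for t
      proof -
        have "gam f t v > 0" using d(2) t by (auto simp: T_def dist_commute)
        then have "v \<in> supp (gam f t)" by (simp add: supp_def)
        then show ?thesis using v(2) by (auto simp: inI_def)
      qed
      ultimately show ?thesis using True by blast
    next
      case False
      define F where "F = supp (gam f a)"
      have fF: "finite F" "F \<noteq> {}" using supp_ne[OF SC pa] by (auto simp: F_def)
      have "\<forall>v\<in>F. \<exists>d>0. \<forall>t\<in>{0..1}. dist t a < d \<longrightarrow> gam f t v > 0"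
        using loc_pos[OF gam_cont[OF f] a] supp_pos[OF pa] by (auto simp: F_def)
      then obtain dd where dd: "\<forall>v\<in>F. dd v > 0 \<and> (\<forall>t\<in>{0..1}. dist t a < dd v \<longrightarrow> gam f t v > 0)"
        using bchoice[of F "\<lambda>v d. d > 0 \<and> (\<forall>t\<in>{0..1}. dist t a < d \<longrightarrow> gam f t v > 0)"] by blast
      define d where "d = Min (dd ` F)"
      have d0: "d > 0" using fF dd by (simp add: d_def)
      define T where "T = {0..1} \<inter> ball a d"
      have "openin (top_of_set {0..1}) T" by (simp add: T_def openin_open_Int)
      moreover have "a \<in> T" using a d0 by (simp add: T_def)
      moreover have "\<not> inI M x r (gam f t)" if t: "t \<in> T" for t
      proof
        assume It: "inI M x r (gam f t)"
        have t01: "t \<in> {0..1}" and dt: "dist t a < d" using t by (auto simp: T_def dist_commute)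
        have "F \<subseteq> supp (gam f t)"
        proof
          fix v assume v: "v \<in> F"
          have "d \<le> dd v" using fF v by (simp add: d_def)
          then have "gam f t v > 0" using dd v t01 dt by auto
          then show "v \<in> supp (gam f t)" by (simp add: supp_def)
        qed
        moreover have "supp (gam f t) \<in> cball_sc M x r"
          using inI_cball[OF SC fM gam_real[OF f] It r] t01 by auto
        ultimately have "F \<in> cball_sc M x r" using cball_sub fF by blast
        moreover have "F \<notin> cball_sc M x r"
          unfolding F_def using notI_notcball[OF pa False r] U a by blast
        ultimately show False by blast
      qed
      ultimately show ?thesis using False by blast
    qed
  qed
  have R: "inI M x r (gam f 0) = inI M x r (gam f b)" if b: "b \<in> {0..1::real}" for b
    by (rule connected_equivalence_relation[of "{0..1}" 0 b "\<lambda>s t. inI M x r (gam f s) = inI M x r (gam f t)"])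
       (use loc b in auto)
  show ?thesis using R by (cases "inI M x r (gam f 0)") auto
qed

lemma e_inv: "x \<in> standard_simplex 1 \<Longrightarrow> e (x 1) = x \<and> 0 \<le> x 1 \<and> x 1 \<le> 1"
  using std1_facts[of x] by (auto simp: e_def)

lemma h2:
  fixes a b :: real
  assumes "a < (b - 1) / 2"
  shows "2 * a + 1 < b"
proof -
  have "2 * a < 2 * ((b - 1) / 2)" using assms by (rule mult_strict_left_mono) simp
  moreover have "2 * ((b - 1) / 2) = b - 1" by simp
  ultimately show ?thesis by linarith
qed

lemma h3: "real r < (real (s::nat) - 1) / 2 \<Longrightarrow> 2 * r + 1 < s"
proof -
  assume "real r < (real (s::nat) - 1) / 2"
  then have "2 * real r + 1 < real s" by (rule h2)
  then have "real (2 * r + 1) < real s" by simp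
  then show ?thesis by (simp only: of_nat_less_iff)
qed

theorem lemma2p5:
  fixes M H :: "nat set set" and n x r :: nat
    and c :: "((nat \<Rightarrow> real) \<Rightarrow> (nat \<Rightarrow> real)) \<Rightarrow> bool"
  assumes "finite_complex_dim M n"
    and "cocycle1 (realization_top M) c"
    and "\<not> coboundary1 (realization_top M) c"
    and "subcomplex H M" and "\<forall>s\<in>H. card s \<le> n" (* dim H \<le> n - 1 *)
    and "cuts M H c"
    and "{x} \<in> H"
    and "r \<ge> 1" and "real r < (real (sys_alpha M c) - 1) / 2"
  shows "cuts M (modified_cut M H x r) c"
proof -
  have SC: "simplicial_complex M" and fM: "finite M" using assms(1) unfolding finite_complex_dim_def by blast+
  have cc: "cocycle1 (realization_top M) c" by (rule assms(2))
  have r: "r \<ge> 1" by (rule assms(8))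
  have sysb: "2 * r + 1 < sys_alpha M c" using h3[OF assms(9)] .
  have cbH: "coboundary1 (subtopology (realization_top M) (realization M - realization H)) c"
    using assms(6) by (simp only: cuts_def)
  from cbH[unfolded coboundary1_def] obtain bH :: "((nat \<Rightarrow> real) \<Rightarrow> nat \<Rightarrow> real) \<Rightarrow> bool" where bH: "\<forall>f. singular_simplex 1 (subtopology (realization_top M) (realization M - realization H)) f \<longrightarrow>
      (c f \<longleftrightarrow> bH (singular_face 1 0 f) \<noteq> bH (singular_face 1 1 f))" ..
  define b where "b g = (if inI M x r (g (pt 0)) then bB M c x r (g (pt 0)) else bH g)" for g
  show ?thesis unfolding cuts_def coboundary1_def
  proof (intro exI[of _ b] allI impI)
    fix f
    assume fs: "singular_simplex 1 (subtopology (realization_top M) (realization M - realization (modified_cut M H x r))) f"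
    then have f: "singular_simplex 1 (realization_top M) f"
      and img: "f ` standard_simplex 1 \<subseteq> realization M - realization (modified_cut M H x r)"
      by (simp_all add: singular_simplex_subtopology)
    have gM: "gam f t \<in> realization M" and gU: "supp (gam f t) \<notin> modified_cut M H x r"
      if "t \<in> {0..1}" for t
    proof -
      have "e t \<in> standard_simplex 1" using e_std that by auto
      then have "f (e t) \<in> realization M - realization (modified_cut M H x r)"
        using img by blast
      then have g1: "gam f t \<in> realization M" and g2: "gam f t \<notin> realization (modified_cut M H x r)"
        by (simp_all add: gam_def)
      show "gam f t \<in> realization M" by (rule g1)
      show "supp (gam f t) \<notin> modified_cut M H x r" using g2 real_mem[OF g1, of "modified_cut M H x r"] by simp
    qed
    have f0: "singular_face 1 0 f (pt 0) = gam f 1" and f1: "singular_face 1 1 f (pt 0) = gam f 0"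
      by (rule face_pt0)+
    consider (A) "\<forall>t\<in>{0..1}. inI M x r (gam f t)" | (B) "\<forall>t\<in>{0..1}. \<not> inI M x r (gam f t)"
      using dich[OF SC fM r f] gU by blast
    then show "c f = (b (singular_face 1 0 f) \<noteq> b (singular_face 1 1 f))"
    proof cases
      case A
      have WW: "\<forall>t\<in>{0..1}. \<forall>v\<in>supp (gam f t). dist_le M x v r"
        using inI_W[OF SC gM _ r] A by blast
      have "c f = (bB M c x r (gam f 0) \<noteq> bB M c x r (gam f 1))"
        by (rule ballpath[OF SC cc sysb f WW])
      moreover have "b (singular_face 1 0 f) = bB M c x r (gam f 1)"
        unfolding b_def f0 using A by simp
      moreover have "b (singular_face 1 1 f) = bB M c x r (gam f 0)"
        unfolding b_def f1 using A by simp
      ultimately show ?thesis by blast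
    next
      case B
      have "f ` standard_simplex 1 \<subseteq> realization M - realization H"
      proof
        fix y assume "y \<in> f ` standard_simplex 1"
        then obtain z where z: "z \<in> standard_simplex 1" "y = f z" by blast
        have zi: "e (z 1) = z" "z 1 \<in> {0..1}" using e_inv[OF z(1)] by auto
        have y: "y = gam f (z 1)" using z(2) zi by (simp add: gam_def)
        have "supp y \<notin> H"
          using notI_notH[OF SC gM[OF zi(2)] _ r gU[OF zi(2)]] B zi(2) y by blast
        then show "y \<in> realization M - realization H" using gM[OF zi(2)] y real_mem by blast
      qed
      then have "singular_simplex 1 (subtopology (realization_top M) (realization M - realization H)) f"
        using f by (simp add: singular_simplex_subtopology)
      then have "c f = (bH (singular_face 1 0 f) \<noteq> bH (singular_face 1 1 f))" using bH by blast
      moreover have "b (singular_face 1 0 f) = bH (singular_face 1 0 f)"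
        unfolding b_def f0 using B by simp
      moreover have "b (singular_face 1 1 f) = bH (singular_face 1 1 f)"
        unfolding b_def f1 using B by simp
      ultimately show ?thesis by blast
    qed
  qed
qed

end
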